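(* Assume the setup in the context. For $i\in\{n-2,n-1\}$ with $P(T=i)>0$, we have $P(|S|\le1\mid T=i)\ge\frac12$, where $S:=\sum_{j=1}^n v_j\epsilon_j$.
   Context: Let $n\ge4$ and let $v_1,\dots,v_n$ be real numbers with $\sum_{i=1}^n v_i^2\le1$ ordered so that $v_n\ge v_1\ge v_{n-1}\ge v_2\ge v_3\ge\cdots\ge v_{n-2}\ge0$. Let $\epsilon_1,\dots,\epsilon_n$ be independent Rademacher random variables ($\pm1$ with probability $\tfrac12$ each). For $t\in\{1,\dots,n-1\}$ put $X_t:=\sum_{i=1}^t v_i\epsilon_i$. Define the random time $T:=\min\big(\{t\le n-1: |X_t|>1-v_{t+1}\}\cup\{n-1\}\big)$. *)

theory Defs
  imports "HOL-Probability.Probability"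
begin

definition rademacher :: "nat \<Rightarrow> (nat \<Rightarrow> real) pmf" where
  "rademacher n = pmf_of_set (PiE {1..n} (\<lambda>_. {-1, 1}))"

definition partS :: "(nat \<Rightarrow> real) \<Rightarrow> nat \<Rightarrow> (nat \<Rightarrow> real) \<Rightarrow> real" where
  "partS v t eps = (\<Sum>i=1..t. v i * eps i)"

definition stopT :: "nat \<Rightarrow> (nat \<Rightarrow> real) \<Rightarrow> (nat \<Rightarrow> real) \<Rightarrow> nat" where
  "stopT n v eps = Min ({t \<in> {1..n-1}. \<bar>partS v t eps\<bar> > 1 - v (t+1)} \<union> {n-1})"

end

theory Submission
  imports Defs
begin

lemma partS_Suc: "partS v (Suc t) e = partS v t e + v (Suc t) * e (Suc t)"
  unfolding partS_def by (simp add: sum.cl_ivl_Suc)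

lemma stopT_le:
  assumes "t \<in> {1..n-1}" "\<bar>partS v t e\<bar> > 1 - v (t+1)"
  shows "stopT n v e \<le> t"
  unfolding stopT_def using assms by (intro Min_le) auto

lemma stopT_not_trig:
  assumes "t \<in> {1..n-1}" "t < stopT n v e"
  shows "\<bar>partS v t e\<bar> \<le> 1 - v (t+1)"
  using stopT_le[of t n v e] assms by force

lemma v_mono_down:
  fixes j n :: nat
  assumes "\<And>j. 2 \<le> j \<Longrightarrow> j < n-2 \<Longrightarrow> v (j+1) \<le> (v j::real)"
    and "j \<le> n-2" "2 \<le> j"
  shows "v (n-2) \<le> v j"
  using assms(2,3)
proof (induction j rule: inc_induct)
  case base then show ?case by simp
next
  case (step m)
  then have "v (n-2) \<le> v (Suc m)" by simp
  also have "\<dots> \<le> v m" using assms(1)[of m] step by simp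
  finally show ?case .
qed

lemma partS_upd: "t < n \<Longrightarrow> partS v t (e(n := x)) = partS v t e"
  unfolding partS_def by (intro sum.cong) auto

lemma stopT_upd: "stopT n v (e(n := x)) = stopT n v e"
proof -
  have "{t \<in> {1..n-1}. \<bar>partS v t (e(n := x))\<bar> > 1 - v (t+1)} = {t \<in> {1..n-1}. \<bar>partS v t e\<bar> > 1 - v (t+1)}"
    by (auto simp: partS_upd)
  then show ?thesis unfolding stopT_def by simp
qed

lemma pointwise:
  fixes n :: nat and v :: "nat \<Rightarrow> real" and i :: nat
  assumes "n \<ge> 4"
    and "(\<Sum>j=1..n. (v j)^2) \<le> 1"
    and "v 1 \<le> v n" and "v (n-1) \<le> v 1" and "v 2 \<le> v (n-1)"
    and "\<And>j. 2 \<le> j \<Longrightarrow> j < n-2 \<Longrightarrow> v (j+1) \<le> v j"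
    and "v (n-2) \<ge> 0"
    and "i \<in> {n-2, n-1}"
    and e: "e \<in> PiE {1..n} (\<lambda>_. {-1, 1})"
    and st: "stopT n v e = i"
  shows "\<bar>partS v n e\<bar> \<le> 1 \<or> \<bar>partS v n (e(n := - e n))\<bar> \<le> 1"
proof -
  define m where "m = n - 4"
  have m: "n = Suc (Suc (Suc (Suc m)))" using assms(1) unfolding m_def by simp
  have ej: "\<And>j. j \<in> {1..n} \<Longrightarrow> \<bar>e j\<bar> = 1" using PiE_mem[OF e] by fastforce
  have v2: "v (n-2) \<le> v 2" using v_mono_down[of n v 2] assms(6) m by simp
  have vn1: "v (n-1) \<ge> 0" using v2 assms(5,7) by linarith
  have "(v n)^2 \<le> (\<Sum>j=1..n. (v j)^2)" by (rule member_le_sum) (use m in auto)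
  then have "(v n)^2 \<le> 1" using assms(2) by linarith
  then have vn: "\<bar>v n\<bar> \<le> 1" by (simp add: abs_square_le_1)
  have e1: "\<bar>e (n-1)\<bar> = 1" "\<bar>e (n-2)\<bar> = 1" "\<bar>e n\<bar> = 1" using ej m by auto
  have p1: "partS v (n-1) e = partS v (n-2) e + v (n-1) * e (n-1)"
    using partS_Suc[of v "Suc (Suc m)" e] m by simp
  have p2: "partS v (n-2) e = partS v (n-3) e + v (n-2) * e (n-2)"
    using partS_Suc[of v "Suc m" e] m by simp
  have p3: "partS v n e = partS v (n-1) e + v n * e n"
    using partS_Suc[of v "Suc (Suc (Suc m))" e] m by simp
  have p4: "partS v n (e(n := - e n)) = partS v (n-1) e - v n * e n"
    using partS_Suc[of v "Suc (Suc (Suc m))" "e(n := - e n)"] m partS_upd[of "n-1" n v e] by simp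
  have a1: "\<bar>v (n-1) * e (n-1)\<bar> = v (n-1)" using e1 vn1 by (simp add: abs_mult)
  have a2: "\<bar>v (n-2) * e (n-2)\<bar> = v (n-2)" using e1 assms(7) by (simp add: abs_mult)
  have Y: "\<bar>partS v (n-1) e\<bar> \<le> 1 + v (n-1)"
  proof (cases "i = n-1")
    case True
    have "\<bar>partS v (n-2) e\<bar> \<le> 1 - v (n-2+1)"
      by (rule stopT_not_trig[where n=n]) (use m st True in auto)
    then have "\<bar>partS v (n-2) e\<bar> \<le> 1 - v (n-1)" using m by simp
    then show ?thesis using p1 a1 vn1 by linarith
  next
    case False
    then have "i = n-2" using assms(8) by auto
    have "\<bar>partS v (n-3) e\<bar> \<le> 1 - v (n-3+1)"
      by (rule stopT_not_trig[where n=n]) (use m st \<open>i = n-2\<close> in auto)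
    then have "\<bar>partS v (n-3) e\<bar> \<le> 1 - v (n-2)" using m by simp
    then have "\<bar>partS v (n-2) e\<bar> \<le> 1" using p2 a2 by linarith
    then show ?thesis using p1 a1 by linarith
  qed
  have c: "\<bar>v n * e n\<bar> = \<bar>v n\<bar>" using e1 by (simp add: abs_mult)
  have "\<bar>partS v (n-1) e\<bar> \<le> 1 + \<bar>v n * e n\<bar>" using Y c assms(3,4) by linarith
  then show ?thesis unfolding p3 p4 using c vn by linarith
qed

theorem mainTheorem8:
  fixes n :: nat and v :: "nat \<Rightarrow> real" and i :: nat
  assumes "n \<ge> 4"
    and "(\<Sum>j=1..n. (v j)^2) \<le> 1"
    and "v 1 \<le> v n" and "v (n-1) \<le> v 1" and "v 2 \<le> v (n-1)"
    and "\<And>j. 2 \<le> j \<Longrightarrow> j < n-2 \<Longrightarrow> v (j+1) \<le> v j"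
    and "v (n-2) \<ge> 0"
    and "i \<in> {n-2, n-1}"
    and "\<P>(eps in measure_pmf (rademacher n). stopT n v eps = i) > 0"
  shows "\<P>(eps in measure_pmf (rademacher n). \<bar>partS v n eps\<bar> \<le> 1 \<bar> stopT n v eps = i) \<ge> 1/2"
proof -
  define \<Omega> where "\<Omega> = PiE {1..n} (\<lambda>_::nat. {-1, 1::real})"
  have fin: "finite \<Omega>" unfolding \<Omega>_def by (intro finite_PiE) auto
  have ne: "\<Omega> \<noteq> {}" unfolding \<Omega>_def by (simp add: PiE_eq_empty_iff)
  define A where "A = {e \<in> \<Omega>. stopT n v e = i}"
  define G where "G = {e \<in> \<Omega>. stopT n v e = i \<and> \<bar>partS v n e\<bar> \<le> 1}"
  define f where "f = (\<lambda>e::nat \<Rightarrow> real. e(n := - e n))"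
  have ff: "f (f e) = e" for e unfolding f_def by auto
  have finA: "finite A" "finite G" using fin unfolding A_def G_def by auto
  have GA: "G \<subseteq> A" unfolding A_def G_def by auto
  have fO: "f e \<in> \<Omega>" if "e \<in> \<Omega>" for e
    using that assms(1) unfolding \<Omega>_def f_def by (auto simp: PiE_iff extensional_def)
  have inj: "inj_on f (A - G)" by (metis ff inj_onI)
  have img: "f ` (A - G) \<subseteq> G"
  proof
    fix x assume "x \<in> f ` (A - G)"
    then obtain e where x: "x = f e" and eA: "e \<in> A" "e \<notin> G" by auto
    have "\<bar>partS v n (e(n := - e n))\<bar> \<le> 1"
      using pointwise[OF assms(1-8), of e] eA unfolding A_def G_def \<Omega>_def by auto
    then show "x \<in> G" using eA fO unfolding x G_def A_def f_def by (auto simp: stopT_upd)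
  qed
  have "card (A - G) \<le> card G" by (rule card_inj_on_le[OF inj img finA(2)])
  moreover have "card A = card G + card (A - G)"
    using card_Diff_subset[OF finA(2) GA] card_mono[OF finA(1) GA] by simp
  ultimately have le: "real (card A) \<le> 2 * real (card G)" by linarith
  have pm: "measure (measure_pmf (rademacher n)) X = card (\<Omega> \<inter> X) / card \<Omega>" for X
    unfolding rademacher_def \<Omega>_def[symmetric] by (rule measure_pmf_of_set[OF ne fin])
  have PA: "\<P>(eps in measure_pmf (rademacher n). stopT n v eps = i) = card A / card \<Omega>"
    unfolding pm A_def by (auto intro!: arg_cong[where f=card])
  have PG: "\<P>(eps in measure_pmf (rademacher n). \<bar>partS v n eps\<bar> \<le> 1 \<and> stopT n v eps = i) = card G / card \<Omega>"
    unfolding pm G_def by (auto intro!: arg_cong[where f=card])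
  have cO: "card \<Omega> > 0" using fin ne by (simp add: card_gt_0_iff)
  have cA: "card A > 0" using assms(9) unfolding PA by (auto simp: zero_less_divide_iff)
  have "\<P>(eps in measure_pmf (rademacher n). \<bar>partS v n eps\<bar> \<le> 1 \<bar> stopT n v eps = i) = card G / card A"
    unfolding cond_prob_def PA PG using cO by (simp add: field_simps)
  also have "\<dots> \<ge> 1/2" using le cA by (simp add: field_simps)
  finally show ?thesis .
qed

end
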